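(* Let $s\le\ell$ be positive integers and $\tau\in\mathbb{Z}_{\ge0}$. Then a family $\lambda_{\mathbf{i}},\psi_{\mathbf{j}}\in\mathcal{R}$ ($\mathbf{i}\in\mathcal{I},\mathbf{j}\in\mathcal{J}$) is a solution of degree $\tau$ of Problem 1 if and only if the family of polynomials defined by $(\lambda_{\mathbf{i},0},\dots,\lambda_{\mathbf{i},q-1})=\nu(\lambda_{\mathbf{i}})$ and $(\psi_{\mathbf{j},0},\dots,\psi_{\mathbf{j},q-1})=\nu(\psi_{\mathbf{j}})$ is a monic solution of degree $\tau$ of Problem 2.
   Context: Let $q$ be a prime power; the Hermitian curve over $\mathbb{F}_{q^2}$ has affine equation $Y^q+Y=X^{q+1}$, genus $g=\tfrac12q(q-1)$, affine rational points $P_1,\dots,P_n$ ($n=q^3$) and point at infinity $P_\infty$. $\mathcal{R}=\bigcup_{m\ge0}\mathcal{L}(mP_\infty)=\mathbb{F}_{q^2}[X,Y]/(Y^q+Y-X^{q+1})$ with basis $\{X^iY^j:i\ge0,0\le j<q\}$; $\deg_{\mathcal{H}}f=-v_{P_\infty}(f)$, so $\deg_{\mathcal{H}}(X^iY^j)=iq+j(q+1)$; $f\ne0$ is monic if the coefficient of its basis monomial of largest $\deg_{\mathcal{H}}$ is $1$. Fix integers $h\ge1$ and $m_{\mathrm H}$ with $2(g-1)<m_{\mathrm H}<n$. For a received word $\mathbf{r}=(r_{i,j})\in\mathbb{F}_{q^2}^{h\times n}$ let $\mathbf{R}=(R_1,\dots,R_h)$, $R_i\in\mathcal{R}$, $\deg_{\mathcal{H}}R_i<n+2g$,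 $R_i(P_j)=r_{i,j}$; $G=X^{q^2}-X$. For $\mathbf{i},\mathbf{j}\in\mathbb{Z}_{\ge0}^h$: $|\mathbf{i}|=\sum_\mu i_\mu$, $\mathbf{i}\preceq\mathbf{j}$ componentwise, $\mathbf{a}^{\mathbf{i}}=\prod_\mu a_\mu^{i_\mu}$, $\binom{\mathbf{j}}{\mathbf{i}}=\prod_\mu\binom{j_\mu}{i_\mu}$. Let $\mathcal{I}=\{\mathbf{i}:|\mathbf{i}|<s\}$, $\mathcal{J}=\{\mathbf{j}:1\le|\mathbf{j}|\le\ell\}$, $A_{\mathbf{i},\mathbf{j}}=\binom{\mathbf{j}}{\mathbf{i}}\mathbf{R}^{\mathbf{j}-\mathbf{i}}G^{|\mathbf{i}|}$ ($=0$ if $\mathbf{i}\not\preceq\mathbf{j}$). Problem 1: a solution is a family $\lambda_{\mathbf{i}},\psi_{\mathbf{j}}\in\mathcal{R}$ with $\lambda_{\mathbf{0}}$ monic, $\psi_{\mathbf{j}}=\sum_{\mathbf{i}\in\mathcal{I}}\lambda_{\mathbf{i}}A_{\mathbf{i},\mathbf{j}}$ for $|\mathbf{j}|<s$, $\psi_{\mathbf{j}}\equiv\sum_{\mathbf{i}\in\mathcal{I}}\lambda_{\mathbf{i}}A_{\mathbf{i},\mathbf{j}}\bmod G^s$ for $|\mathbf{j}|\ge s$, $\deg_{\mathcal{H}}\lambda_{\mathbf{0}}\ge\deg_{\mathcal{H}}\lambda_{\mathbf{i}}-|\mathbf{i}|(2g-1)$ ($\mathbf{i}\in\mathcal{I}$),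 $\deg_{\mathcal{H}}\lambda_{\mathbf{0}}\ge\deg_{\mathcal{H}}\psi_{\mathbf{j}}-|\mathbf{j}|m_{\mathrm H}$ ($\mathbf{j}\in\mathcal{J}$); its degree is $\deg_{\mathcal{H}}\lambda_{\mathbf{0}}$. Vector representation: every $a\in\mathcal{R}$ is uniquely $a=\sum_{\iota=0}^{q-1}a_\iota Y^\iota$ with $a_\iota\in\mathbb{F}_{q^2}[X]$; $\nu(a)=(a_0,\dots,a_{q-1})$. Let $\mu(b)\in\mathbb{F}_{q^2}[X]^{q\times(2q-1)}$ have $(\iota,\iota+k)$ entry $b_k$ for $0\le\iota\le q-1$, $0\le k\le q-1$ and zeros elsewhere (rows indexed $0..q-1$, columns $0..2q-2$), and let $\Xi\in\mathbb{F}_{q^2}[X]^{(2q-1)\times q}$ have rows $0..q-1$ equal to the $q\times q$ identity and, for $0\le k\le q-2$, row $q+k$ with entry $X^{q+1}$ in column $k$, $-1$ in column $k+1$, zeros elsewhere. Then $\nu(ab)=\nu(a)\mu(b)\Xi$. Put $\hat A_{\mathbf{i},\mathbf{j}}=\mu(A_{\mathbf{i},\mathbf{j}})\Xi\in\mathbb{F}_{q^2}[X]^{q\times q}$. Write $[q)=\{0,\dots,q-1\}$. Problem 2: find $\lambda_{\mathbf{i},\iota},\psi_{\mathbf{j},\kappa}\in\mathbb{F}_{q^2}[X]$ ($\mathbf{i}\in\mathcal{I},\mathbf{j}\in\mathcal{J},\iota,\kappa\in[q)$), not all zero, such that, with $D=\max_{\iota\in[q)}\{q\deg\lambda_{\mathbf{0},\iota}+\iota(q+1)\}$: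 $\psi_{\mathbf{j},\kappa}=\sum_{\mathbf{i}\in\mathcal{I}}\sum_{\iota=0}^{q-1}\lambda_{\mathbf{i},\iota}(\hat A_{\mathbf{i},\mathbf{j}})_{\iota,\kappa}$ for $1\le|\mathbf{j}|<s$; $\psi_{\mathbf{j},\kappa}\equiv\sum_{\mathbf{i}\in\mathcal{I}}\sum_{\iota=0}^{q-1}\lambda_{\mathbf{i},\iota}(\hat A_{\mathbf{i},\mathbf{j}})_{\iota,\kappa}\bmod G^s$ for $s\le|\mathbf{j}|\le\ell$; $D\ge q\deg\lambda_{\mathbf{i},\iota}+\iota(q+1)-|\mathbf{i}|(2g-1)$ for all $\mathbf{i}\in\mathcal{I},\iota\in[q)$; $D\ge q\deg\psi_{\mathbf{j},\kappa}+\kappa(q+1)-|\mathbf{j}|m_{\mathrm H}$ for all $\mathbf{j}\in\mathcal{J},\kappa\in[q)$ (with $\deg 0=-\infty$). The degree of such a solution is $D$; it is monic if the leading coefficient of the $\lambda_{\mathbf{0},\iota}$ attaining the maximum in $D$ is $1$. *)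

theory Defs
  imports "HOL-Computational_Algebra.Polynomial" "HOL-Computational_Algebra.Primes"
          "HOL-Library.Extended_Real" "HOL-Library.Cardinality"
begin

text \<open>The coordinate ring R = F[X,Y]/(Y^q+Y-X^(q+1)) of the Hermitian curve is modelled as
  (F[X])[Y]/(Y^q+Y-X^(q+1)).  Elements of type 'a poly poly are polynomials in Y whose
  coefficients are polynomials in X.  Elements of R are represented by their unique
  representatives of Y-degree below q (basis X^i Y^j, j<q); ring multiplication is
  multiplication followed by reduction modulo the monic (in Y) polynomial hermY q.\<close>

definition hermY :: "nat \<Rightarrow> 'a::field poly poly" where
  "hermY q = monom 1 q + monom 1 1 - [: monom 1 (q + 1) :]"

definition hred :: "nat \<Rightarrow> 'a::field poly poly \<Rightarrow> 'a poly poly" where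
  "hred q p = pseudo_mod p (hermY q)"

definition inR :: "nat \<Rightarrow> 'a::field poly poly \<Rightarrow> bool" where
  "inR q a \<longleftrightarrow> degree a < q"

definition Gx :: "nat \<Rightarrow> 'a::field poly" where
  "Gx q = monom 1 (q^2) - monom 1 1"

definition GR :: "nat \<Rightarrow> 'a::field poly poly" where
  "GR q = [: Gx q :]"

definition genus :: "nat \<Rightarrow> nat" where
  "genus q = q * (q - 1) div 2"

text \<open>Degree of a vector (v_0,...,v_(q-1)) of polynomials: max of q deg v_i + i(q+1),
  with deg 0 = -infinity.  For a in R, deg_H a = vdeg q (coeff a) since
  deg_H (X^i Y^j) = iq + j(q+1).\<close>
definition vdeg :: "nat \<Rightarrow> (nat \<Rightarrow> 'a::zero poly) \<Rightarrow> ereal" where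
  "vdeg q v = Max ((\<lambda>\<iota>. if v \<iota> = 0 then -\<infinity>
        else ereal (real q * real (degree (v \<iota>)) + real \<iota> * (real q + 1))) ` {..<q})"

definition degH :: "nat \<Rightarrow> 'a::field poly poly \<Rightarrow> ereal" where
  "degH q a = vdeg q (coeff a)"

definition vmonic :: "nat \<Rightarrow> (nat \<Rightarrow> 'a::field poly) \<Rightarrow> bool" where
  "vmonic q v \<longleftrightarrow> (\<exists>\<iota><q. v \<iota> \<noteq> 0) \<and>
     (\<forall>\<iota><q. v \<iota> \<noteq> 0 \<and>
        ereal (real q * real (degree (v \<iota>)) + real \<iota> * (real q + 1)) = vdeg q v
        \<longrightarrow> lead_coeff (v \<iota>) = 1)"

definition monicH :: "nat \<Rightarrow> 'a::field poly poly \<Rightarrow> bool" where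
  "monicH q a \<longleftrightarrow> vmonic q (coeff a)"

text \<open>Multi-indices in Z_{>=0}^h: functions nat => nat vanishing outside {..<h}.\<close>
definition absm :: "nat \<Rightarrow> (nat \<Rightarrow> nat) \<Rightarrow> nat" where
  "absm h i = (\<Sum>\<mu><h. i \<mu>)"

definition Iset :: "nat \<Rightarrow> nat \<Rightarrow> (nat \<Rightarrow> nat) set" where
  "Iset h s = {i. (\<forall>\<mu>\<ge>h. i \<mu> = 0) \<and> absm h i < s}"

definition Jset :: "nat \<Rightarrow> nat \<Rightarrow> (nat \<Rightarrow> nat) set" where
  "Jset h l = {j. (\<forall>\<mu>\<ge>h. j \<mu> = 0) \<and> 1 \<le> absm h j \<and> absm h j \<le> l}"

definition Aent :: "nat \<Rightarrow> nat \<Rightarrow> (nat \<Rightarrow> 'a::field poly poly) \<Rightarrow> (nat \<Rightarrow> nat) \<Rightarrow> (nat \<Rightarrow> nat)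
                     \<Rightarrow> 'a poly poly" where
  "Aent q h R i j = (if (\<forall>\<mu><h. i \<mu> \<le> j \<mu>)
     then hred q ([: [: of_nat (\<Prod>\<mu><h. j \<mu> choose i \<mu>) :] :]
                   * (\<Prod>\<mu><h. R \<mu> ^ (j \<mu> - i \<mu>)) * GR q ^ absm h i)
     else 0)"

definition muM :: "nat \<Rightarrow> (nat \<Rightarrow> 'a::field poly) \<Rightarrow> nat \<Rightarrow> nat \<Rightarrow> 'a poly" where
  "muM q b \<iota> c = (if \<iota> \<le> c \<and> c - \<iota> < q then b (c - \<iota>) else 0)"

definition XiM :: "nat \<Rightarrow> nat \<Rightarrow> nat \<Rightarrow> 'a::field poly" where
  "XiM q c k = (if c < q then (if c = k then 1 else 0)
                else if k = c - q then monom 1 (q + 1)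
                else if k = c - q + 1 then -1 else 0)"

definition Ahat :: "nat \<Rightarrow> 'a::field poly poly \<Rightarrow> nat \<Rightarrow> nat \<Rightarrow> 'a poly" where
  "Ahat q b \<iota> \<kappa> = (\<Sum>c<2 * q - 1. muM q (coeff b) \<iota> c * XiM q c \<kappa>)"

definition prob1_sol ::
  "nat \<Rightarrow> nat \<Rightarrow> nat \<Rightarrow> nat \<Rightarrow> int \<Rightarrow> (nat \<Rightarrow> 'a::field poly poly)
   \<Rightarrow> ((nat \<Rightarrow> nat) \<Rightarrow> 'a poly poly) \<Rightarrow> ((nat \<Rightarrow> nat) \<Rightarrow> 'a poly poly) \<Rightarrow> nat \<Rightarrow> bool" where
  "prob1_sol q h s l mH R lam psi \<tau> \<longleftrightarrow>
     monicH q (lam (\<lambda>_. 0)) \<and>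
     (\<forall>j\<in>Jset h l. absm h j < s \<longrightarrow>
        psi j = hred q (\<Sum>i\<in>Iset h s. lam i * Aent q h R i j)) \<and>
     (\<forall>j\<in>Jset h l. s \<le> absm h j \<longrightarrow>
        (\<exists>c. hred q (psi j - (\<Sum>i\<in>Iset h s. lam i * Aent q h R i j) - c * GR q ^ s) = 0)) \<and>
     (\<forall>i\<in>Iset h s. degH q (lam (\<lambda>_. 0)) \<ge>
        degH q (lam i) - ereal (real (absm h i) * (2 * real (genus q) - 1))) \<and>
     (\<forall>j\<in>Jset h l. degH q (lam (\<lambda>_. 0)) \<ge>
        degH q (psi j) - ereal (real (absm h j) * real_of_int mH)) \<and>
     degH q (lam (\<lambda>_. 0)) = ereal (real \<tau>)"

definition prob2_sol ::
  "nat \<Rightarrow> nat \<Rightarrow> nat \<Rightarrow> nat \<Rightarrow> int \<Rightarrow> (nat \<Rightarrow> 'a::field poly poly)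
   \<Rightarrow> ((nat \<Rightarrow> nat) \<Rightarrow> nat \<Rightarrow> 'a poly) \<Rightarrow> ((nat \<Rightarrow> nat) \<Rightarrow> nat \<Rightarrow> 'a poly) \<Rightarrow> bool" where
  "prob2_sol q h s l mH R lam psi \<longleftrightarrow>
     ((\<exists>i\<in>Iset h s. \<exists>\<iota><q. lam i \<iota> \<noteq> 0) \<or> (\<exists>j\<in>Jset h l. \<exists>\<kappa><q. psi j \<kappa> \<noteq> 0)) \<and>
     (\<forall>j\<in>Jset h l. absm h j < s \<longrightarrow> (\<forall>\<kappa><q.
        psi j \<kappa> = (\<Sum>i\<in>Iset h s. \<Sum>\<iota><q. lam i \<iota> * Ahat q (Aent q h R i j) \<iota> \<kappa>))) \<and>
     (\<forall>j\<in>Jset h l. s \<le> absm h j \<longrightarrow> (\<forall>\<kappa><q.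
        Gx q ^ s dvd (psi j \<kappa> - (\<Sum>i\<in>Iset h s. \<Sum>\<iota><q. lam i \<iota> * Ahat q (Aent q h R i j) \<iota> \<kappa>)))) \<and>
     (\<forall>i\<in>Iset h s. \<forall>\<iota><q. lam i \<iota> \<noteq> 0 \<longrightarrow>
        vdeg q (lam (\<lambda>_. 0)) \<ge> ereal (real q * real (degree (lam i \<iota>)) + real \<iota> * (real q + 1)
                                     - real (absm h i) * (2 * real (genus q) - 1))) \<and>
     (\<forall>j\<in>Jset h l. \<forall>\<kappa><q. psi j \<kappa> \<noteq> 0 \<longrightarrow>
        vdeg q (lam (\<lambda>_. 0)) \<ge> ereal (real q * real (degree (psi j \<kappa>)) + real \<kappa> * (real q + 1)
                                     - real (absm h j) * real_of_int mH))"

definition prob2_monic_sol ::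
  "nat \<Rightarrow> nat \<Rightarrow> nat \<Rightarrow> nat \<Rightarrow> int \<Rightarrow> (nat \<Rightarrow> 'a::field poly poly)
   \<Rightarrow> ((nat \<Rightarrow> nat) \<Rightarrow> nat \<Rightarrow> 'a poly) \<Rightarrow> ((nat \<Rightarrow> nat) \<Rightarrow> nat \<Rightarrow> 'a poly) \<Rightarrow> nat \<Rightarrow> bool" where
  "prob2_monic_sol q h s l mH R lam psi \<tau> \<longleftrightarrow>
     prob2_sol q h s l mH R lam psi \<and> vmonic q (lam (\<lambda>_. 0)) \<and>
     vdeg q (lam (\<lambda>_. 0)) = ereal (real \<tau>)"

end

theory Submission imports Defs begin

lemma hermY_coeff: "coeff (hermY q :: 'a::field poly poly) n =
   (if n = q then 1 else 0) + (if n = 1 then 1 else 0) - (if n = 0 then monom 1 (q+1) else 0)"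
  by (simp add: hermY_def coeff_monom flip: monom_0)

lemma hermY_deg: assumes "2 \<le> q" shows "degree (hermY q :: 'a::field poly poly) = q"
  and "lead_coeff (hermY q :: 'a::field poly poly) = 1"
proof -
  have c1: "coeff (hermY q :: 'a poly poly) q = 1" using assms by (simp add: hermY_coeff)
  have c0: "\<And>n. n > q \<Longrightarrow> coeff (hermY q :: 'a poly poly) n = 0" using assms by (simp add: hermY_coeff)
  have "degree (hermY q :: 'a::field poly poly) \<le> q" using c0 by (intro degree_le) auto
  moreover have "q \<le> degree (hermY q :: 'a::field poly poly)" using c1 by (intro le_degree) simp
  ultimately show d: "degree (hermY q :: 'a::field poly poly) = q" by simp
  show "lead_coeff (hermY q :: 'a::field poly poly) = 1" using d c1 by simp
qed

lemma hred_props: assumes "2 \<le> q"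
  shows "degree (hred q p) < q" "hermY q dvd (p - hred q p)"
proof -
  have ne: "hermY q \<noteq> (0::'a::field poly poly)"
    using hermY_deg(2)[OF assms, where 'a='a] by (metis coeff_0 zero_neq_one)
  obtain d r where pd: "pseudo_divmod p (hermY q) = (d, r)" by fastforce
  have r: "hred q p = r" by (simp add: hred_def pseudo_mod_def pd)
  from pseudo_divmod[OF ne pd] hermY_deg[OF assms, where 'a='a]
  have pe: "p = hermY q * d + r" and rd: "r = 0 \<or> degree r < q" by auto
  show "degree (hred q p) < q" using r rd assms by auto
  have "p - hred q p = hermY q * d" using pe r by simp
  then show "hermY q dvd (p - hred q p)" by simp
qed

lemma small_dvd_zero: assumes "2 \<le> q" "degree (r::'a::field poly poly) < q" "hermY q dvd r"
  shows "r = 0"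
proof (rule ccontr)
  assume "r \<noteq> 0"
  from assms(3) obtain k where k: "r = hermY q * k" by blast
  with \<open>r \<noteq> 0\<close> have "k \<noteq> 0" by auto
  have "hermY q \<noteq> (0::'a poly poly)" using \<open>r \<noteq> 0\<close> k by auto
  hence "degree r = degree (hermY q :: 'a poly poly) + degree k" unfolding k using \<open>k \<noteq> 0\<close>
    by (rule degree_mult_eq)
  hence "degree r = q + degree k" using hermY_deg(1)[OF assms(1), where 'a='a] by simp
  with assms(2) show False by simp
qed

lemma hred_char: assumes "2 \<le> q" "degree r < q" "hermY q dvd (p - r)"
  shows "hred q p = (r::'a::field poly poly)"
proof -
  have "hermY q dvd ((p - r) - (p - hred q p))"
    by (intro dvd_diff assms(3) hred_props(2)[OF assms(1)])
  then have "hermY q dvd (hred q p - r)" by (simp add: algebra_simps)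
  moreover have "degree (hred q p - r) < q"
    by (intro degree_diff_less hred_props(1)[OF assms(1)] assms(2))
  ultimately have "hred q p - r = 0" by (intro small_dvd_zero[OF assms(1)])
  then show ?thesis by simp
qed

lemma hred_add: assumes "2 \<le> q" shows "hred q (a + b) = hred q a + (hred q b :: 'a::field poly poly)"
proof (rule hred_char[OF assms])
  show "degree (hred q a + hred q b) < q" using hred_props(1)[OF assms] by (meson degree_add_less)
  have "hermY q dvd ((a - hred q a) + (b - hred q b))" by (intro dvd_add hred_props(2)[OF assms])
  then show "hermY q dvd (a + b - (hred q a + hred q b))" by (simp add: algebra_simps)
qed

lemma hred_zero: assumes "2 \<le> q" shows "hred q 0 = (0::'a::field poly poly)"
  by (rule hred_char[OF assms]) (use assms in auto)

lemma hred_sum: assumes "2 \<le> q" shows "hred q (sum f A) = (\<Sum>x\<in>A. hred q (f x) :: 'a::field poly poly)"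
proof (cases "finite A")
  case True then show ?thesis
    by (induction rule: finite_induct) (auto simp: hred_zero[OF assms] hred_add[OF assms])
qed (simp add: hred_zero[OF assms])

lemma mulcoeff:
  fixes a b :: "'a::field poly poly"
  assumes "degree a < q" "degree b < q"
  shows "(\<Sum>\<iota><q. coeff a \<iota> * muM q (coeff b) \<iota> c) = coeff (a*b) c"
proof -
  let ?T = "{..<q} \<inter> {..c}"
  have "(\<Sum>\<iota><q. coeff a \<iota> * muM q (coeff b) \<iota> c) = (\<Sum>\<iota>\<in>?T. coeff a \<iota> * coeff b (c - \<iota>))"
  proof (rule sum.mono_neutral_cong_right)
    show "\<forall>i\<in>{..<q} - ?T. coeff a i * muM q (coeff b) i c = 0" by (auto simp: muM_def)
    show "\<And>x. x \<in> ?T \<Longrightarrow> coeff a x * muM q (coeff b) x c = coeff a x * coeff b (c - x)"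
      using assms(2) by (auto simp: muM_def coeff_eq_0)
  qed auto
  also have "\<dots> = (\<Sum>i\<le>c. coeff a i * coeff b (c - i))"
  proof (rule sum.mono_neutral_left)
    show "\<forall>i\<in>{..c} - ?T. coeff a i * coeff b (c - i) = 0" using assms(1) by (auto intro!: coeff_eq_0)
  qed auto
  finally show ?thesis by (simp add: coeff_mult)
qed

lemma Ahat_eq:
  fixes a b :: "'a::field poly poly"
  assumes "degree a < q" "degree b < q"
  shows "(\<Sum>\<iota><q. coeff a \<iota> * Ahat q b \<iota> \<kappa>) = (\<Sum>c<2*q-1. coeff (a*b) c * XiM q c \<kappa>)"
proof -
  have "(\<Sum>\<iota><q. coeff a \<iota> * Ahat q b \<iota> \<kappa>) =
     (\<Sum>c<2*q-1. (\<Sum>\<iota><q. coeff a \<iota> * muM q (coeff b) \<iota> c) * XiM q c \<kappa>)"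
    unfolding Ahat_def sum_distrib_left sum_distrib_right
    by (subst sum.swap) (simp add: mult.assoc)
  then show ?thesis by (simp add: mulcoeff[OF assms])
qed

lemma eXi_dvd:
  assumes "2 \<le> q" "c < 2*q-1"
  shows "hermY q dvd (monom 1 c - (\<Sum>\<kappa><q. monom (XiM q c \<kappa>) \<kappa>) :: 'a::field poly poly)"
proof (cases "c < q")
  case True
  have "(\<Sum>\<kappa><q. monom (XiM q c \<kappa>) \<kappa> :: 'a poly poly) = (\<Sum>\<kappa><q. if \<kappa> = c then monom 1 c else 0)"
    by (rule sum.cong) (auto simp: XiM_def True)
  also have "\<dots> = monom 1 c" using True by (simp add: sum.delta)
  finally show ?thesis by simp
next
  case False
  define k where "k = c - q"
  have c: "c = q + k" "k + 1 < q" using False assms unfolding k_def by auto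
  have "(\<Sum>\<kappa><q. monom (XiM q c \<kappa>) \<kappa> :: 'a poly poly) =
      (\<Sum>\<kappa><q. (if \<kappa> = k then monom (monom 1 (q+1)) k else 0) + (if \<kappa> = k+1 then monom (-1) (k+1) else 0))"
    by (rule sum.cong) (auto simp: XiM_def c)
  also have "\<dots> = monom (monom 1 (q+1)) k + monom (-1) (k+1)"
    using c by (simp add: sum.distrib sum.delta)
  also have "\<dots> = monom 1 c - monom 1 k * hermY q"
    by (simp add: hermY_def c algebra_simps mult_monom flip: minus_monom monom_0)
  finally show ?thesis by simp
qed

lemma smult_sum2: "smult a (sum f A) = (\<Sum>x\<in>A. smult a (f x))"
  by (induct A rule: infinite_finite_induct) (simp_all add: smult_add_right)

lemma red_lemma:
  assumes "2 \<le> q" "degree (p::'a::field poly poly) < 2*q-1"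
  shows "hred q p = (\<Sum>\<kappa><q. monom (\<Sum>c<2*q-1. coeff p c * XiM q c \<kappa>) \<kappa>)"
proof (rule hred_char[OF assms(1)])
  let ?r = "(\<Sum>\<kappa><q. monom (\<Sum>c<2*q-1. coeff p c * XiM q c \<kappa>) \<kappa>)"
  show "degree ?r < q"
    by (rule degree_sum_less) (use assms in \<open>auto intro: le_less_trans[OF degree_monom_le]\<close>)
  have p: "p = (\<Sum>c<2*q-1. monom (coeff p c) c)"
  proof -
    have "{..<2*q-1} = {..2*q-2}" using assms by auto
    then show ?thesis using poly_as_sum_of_monoms'[of p "2*q-2"] assms by simp
  qed
  have r: "?r = (\<Sum>c<2*q-1. smult (coeff p c) (\<Sum>\<kappa><q. monom (XiM q c \<kappa>) \<kappa>))"
    unfolding monom_sum smult_sum2 smult_monom by (subst sum.swap) simp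
  have "p - ?r = (\<Sum>c<2*q-1. smult (coeff p c) (monom 1 c - (\<Sum>\<kappa><q. monom (XiM q c \<kappa>) \<kappa>)))"
    apply (subst p) apply (subst r)
    by (simp add: sum_subtractf smult_diff_right smult_monom)
  also have "hermY q dvd \<dots>"
    by (intro dvd_sum dvd_smult eXi_dvd assms) auto
  finally show "hermY q dvd (p - ?r)" .
qed

lemma key_mult:
  fixes a b :: "'a::field poly poly"
  assumes "2 \<le> q" "degree a < q" "degree b < q" "\<kappa> < q"
  shows "coeff (hred q (a*b)) \<kappa> = (\<Sum>\<iota><q. coeff a \<iota> * Ahat q b \<iota> \<kappa>)"
proof -
  have "degree (a*b) < 2*q-1" using assms degree_mult_le[of a b] by linarith
  then have "hred q (a*b) = (\<Sum>\<kappa><q. monom (\<Sum>c<2*q-1. coeff (a*b) c * XiM q c \<kappa>) \<kappa>)"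
    by (rule red_lemma[OF assms(1)])
  then show ?thesis
    unfolding Ahat_eq[OF assms(2,3)] using assms(4) by (simp add: coeff_sum coeff_monom sum.delta)
qed

lemma Aent_deg: assumes "2 \<le> q" shows "degree (Aent q h R i j :: 'a::field poly poly) < q"
  unfolding Aent_def using hred_props(1)[OF assms] assms by auto

lemma L_sum:
  assumes "2 \<le> q" "\<forall>i\<in>I. degree (lam i) < q" "\<kappa> < q"
  shows "coeff (hred q (\<Sum>i\<in>I. lam i * Aent q h R i j)) \<kappa> =
         (\<Sum>i\<in>I. \<Sum>\<iota><q. coeff (lam i) \<iota> * Ahat q (Aent q h R i j :: 'a::field poly poly) \<iota> \<kappa>)"
  unfolding hred_sum[OF assms(1)] coeff_sum
  using assms(2) by (intro sum.cong) (auto intro!: key_mult assms(1,3) Aent_deg)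

lemma eq_low: assumes "degree (a::'a::zero poly) < q" "degree b < q"
  shows "a = b \<longleftrightarrow> (\<forall>\<kappa><q. coeff a \<kappa> = coeff b \<kappa>)"
proof
  assume H: "\<forall>\<kappa><q. coeff a \<kappa> = coeff b \<kappa>"
  show "a = b"
  proof (rule poly_eqI)
    fix n show "coeff a n = coeff b n"
      using H assms by (cases "n < q") (auto simp: coeff_eq_0)
  qed
qed auto

lemma hred_eq0: assumes "2 \<le> q" shows "hred q x = 0 \<longleftrightarrow> hermY q dvd (x::'a::field poly poly)"
  using hred_props[OF assms, of x] hred_char[OF assms, of 0 x] assms by auto

lemma modG:
  fixes psi S :: "'a::field poly poly"
  assumes q: "2 \<le> q" and dp: "degree psi < q"
  shows "(\<exists>c. hred q (psi - S - c * GR q ^ s) = 0) \<longleftrightarrow>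
         (\<forall>\<kappa><q. Gx q ^ s dvd (coeff psi \<kappa> - coeff (hred q S) \<kappa>))"
proof -
  define g where "g = (Gx q ^ s :: 'a poly)"
  have G: "GR q ^ s = [:g:]" by (simp add: GR_def g_def poly_const_pow)
  define D where "D = psi - hred q S"
  have dD: "degree D < q" unfolding D_def by (intro degree_diff_less dp hred_props(1)[OF q])
  have hS: "hermY q dvd (S - hred q S)" by (rule hred_props(2)[OF q])
  show ?thesis unfolding G hred_eq0[OF q] g_def[symmetric]
  proof
    assume "\<exists>c. hermY q dvd (psi - S - c * [:g:])"
    then obtain c where c: "hermY q dvd (psi - S - c * [:g:])" by blast
    have "hermY q dvd ((psi - S - c * [:g:]) + (S - hred q S) + (c - hred q c) * [:g:])"
      by (intro dvd_add c hS dvd_mult2 hred_props(2)[OF q])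
    then have "hermY q dvd (D - hred q c * [:g:])" unfolding D_def by (simp add: algebra_simps)
    moreover have "degree (D - hred q c * [:g:]) < q"
    proof (intro degree_diff_less dD)
      show "degree (hred q c * [:g:]) < q"
        using hred_props(1)[OF q, of c] degree_mult_le[of "hred q c" "[:g:]"] by simp
    qed
    ultimately have "D - hred q c * [:g:] = 0" by (intro small_dvd_zero[OF q])
    then have "D = hred q c * [:g:]" by simp
    then have "\<And>\<kappa>. coeff D \<kappa> = coeff (hred q c) \<kappa> * g" by simp
    then show "\<forall>\<kappa><q. g dvd (coeff psi \<kappa> - coeff (hred q S) \<kappa>)" unfolding D_def by simp
  next
    assume H: "\<forall>\<kappa><q. g dvd (coeff psi \<kappa> - coeff (hred q S) \<kappa>)"
    define c where "c = map_poly (\<lambda>x. x div g) D"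
    have "D = c * [:g:]"
    proof (rule poly_eqI)
      fix n
      show "coeff D n = coeff (c * [:g:]) n"
      proof (cases "n < q")
        case True
        then have "g dvd coeff D n" using H unfolding D_def by simp
        then show ?thesis by (simp add: c_def coeff_map_poly)
      next
        case False
        then have "coeff D n = 0" using dD by (intro coeff_eq_0) simp
        then show ?thesis by (simp add: c_def coeff_map_poly)
      qed
    qed
    then have eq: "psi - S - c * [:g:] = - (S - hred q S)" unfolding D_def by (simp add: algebra_simps)
    have "hermY q dvd - (S - hred q S)" using hS by (simp only: dvd_minus_iff)
    then have "hermY q dvd (psi - S - c * [:g:])" by (simp only: eq)
    then show "\<exists>c. hermY q dvd (psi - S - c * [:g:])" by blast
  qed
qed

lemma degcond:
  fixes v :: "nat \<Rightarrow> 'a::zero poly" and x :: ereal and t :: real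
  assumes "0 < q"
  shows "(vdeg q v - ereal t \<le> x) \<longleftrightarrow>
    (\<forall>\<iota><q. v \<iota> \<noteq> 0 \<longrightarrow> ereal (real q * real (degree (v \<iota>)) + real \<iota> * (real q + 1) - t) \<le> x)"
proof -
  have "(vdeg q v - ereal t \<le> x) \<longleftrightarrow> vdeg q v \<le> x + ereal t" by (simp add: ereal_minus_le)
  also have "\<dots> \<longleftrightarrow> (\<forall>\<iota><q. (if v \<iota> = 0 then -\<infinity>
        else ereal (real q * real (degree (v \<iota>)) + real \<iota> * (real q + 1))) \<le> x + ereal t)"
    unfolding vdeg_def using assms by (subst Max_le_iff) auto
  also have "\<dots> \<longleftrightarrow> (\<forall>\<iota><q. v \<iota> \<noteq> 0 \<longrightarrow> ereal (real q * real (degree (v \<iota>)) + real \<iota> * (real q + 1) - t) \<le> x)"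
  proof -
    have "\<And>a. (ereal a \<le> x + ereal t) \<longleftrightarrow> ereal (a - t) \<le> x"
    proof -
      fix a
      have "ereal (a - t) = ereal a - ereal t" by simp
      moreover have "(ereal a - ereal t \<le> x) \<longleftrightarrow> ereal a \<le> x + ereal t" by (rule ereal_minus_le) simp
      ultimately show "(ereal a \<le> x + ereal t) \<longleftrightarrow> ereal (a - t) \<le> x" by simp
    qed
    then show ?thesis by auto
  qed
  finally show ?thesis .
qed

theorem theorem6:
  fixes q h s l \<tau> :: nat and mH :: int
    and R :: "nat \<Rightarrow> 'a::{field,finite} poly poly"
    and lam psi :: "(nat \<Rightarrow> nat) \<Rightarrow> 'a poly poly"
  assumes "\<exists>p k. prime p \<and> 0 < k \<and> q = p ^ k"
    and "CARD('a) = q ^ 2"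
    and "1 \<le> h"
    and "2 * (int (genus q) - 1) < mH" and "mH < int (q ^ 3)"
    and "1 \<le> s" and "s \<le> l"
    and "\<forall>\<mu><h. inR q (R \<mu>) \<and> degH q (R \<mu>) < ereal (real (q ^ 3 + 2 * genus q))"
    and "\<forall>i\<in>Iset h s. inR q (lam i)"
    and "\<forall>j\<in>Jset h l. inR q (psi j)"
  shows "prob1_sol q h s l mH R lam psi \<tau> \<longleftrightarrow>
         prob2_monic_sol q h s l mH R (\<lambda>i. coeff (lam i)) (\<lambda>j. coeff (psi j)) \<tau>"
proof -
  obtain p k where pk: "prime p" "0 < k" "q = p ^ k" using assms(1) by blast
  have "2 \<le> p" using pk(1) by (rule prime_ge_2_nat)
  moreover have "p \<le> p ^ k" using pk(2) \<open>2 \<le> p\<close> by (intro self_le_power) auto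
  ultimately have q2: "2 \<le> q" using pk(3) by simp
  have q0: "0 < q" using q2 by simp
  let ?I = "Iset h s" and ?J = "Jset h l" and ?L0 = "lam (\<lambda>_. 0)"
  have I0: "(\<lambda>_. 0) \<in> ?I" using assms(6) by (simp add: Iset_def absm_def)
  have dl: "\<forall>i\<in>?I. degree (lam i) < q" using assms(9) by (simp add: inR_def)
  have dp: "\<And>j. j \<in> ?J \<Longrightarrow> degree (psi j) < q" using assms(10) by (simp add: inR_def)
  have LS: "\<And>j \<kappa>. \<kappa> < q \<Longrightarrow> coeff (hred q (\<Sum>i\<in>?I. lam i * Aent q h R i j)) \<kappa> =
         (\<Sum>i\<in>?I. \<Sum>\<iota><q. coeff (lam i) \<iota> * Ahat q (Aent q h R i j) \<iota> \<kappa>)"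
    by (rule L_sum[OF q2 dl])
  have A: "(\<forall>j\<in>?J. absm h j < s \<longrightarrow> psi j = hred q (\<Sum>i\<in>?I. lam i * Aent q h R i j)) \<longleftrightarrow>
     (\<forall>j\<in>?J. absm h j < s \<longrightarrow> (\<forall>\<kappa><q. coeff (psi j) \<kappa> =
         (\<Sum>i\<in>?I. \<Sum>\<iota><q. coeff (lam i) \<iota> * Ahat q (Aent q h R i j) \<iota> \<kappa>)))"
  proof -
    have "\<And>j. j \<in> ?J \<Longrightarrow> (psi j = hred q (\<Sum>i\<in>?I. lam i * Aent q h R i j)) \<longleftrightarrow>
       (\<forall>\<kappa><q. coeff (psi j) \<kappa> = (\<Sum>i\<in>?I. \<Sum>\<iota><q. coeff (lam i) \<iota> * Ahat q (Aent q h R i j) \<iota> \<kappa>))"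
      by (subst eq_low[OF dp hred_props(1)[OF q2]]) (auto simp: LS)
    then show ?thesis by blast
  qed
  have B: "(\<forall>j\<in>?J. s \<le> absm h j \<longrightarrow>
        (\<exists>c. hred q (psi j - (\<Sum>i\<in>?I. lam i * Aent q h R i j) - c * GR q ^ s) = 0)) \<longleftrightarrow>
     (\<forall>j\<in>?J. s \<le> absm h j \<longrightarrow> (\<forall>\<kappa><q.
        Gx q ^ s dvd (coeff (psi j) \<kappa> - (\<Sum>i\<in>?I. \<Sum>\<iota><q. coeff (lam i) \<iota> * Ahat q (Aent q h R i j) \<iota> \<kappa>))))"
  proof -
    have "\<And>j. j \<in> ?J \<Longrightarrow> (\<exists>c. hred q (psi j - (\<Sum>i\<in>?I. lam i * Aent q h R i j) - c * GR q ^ s) = 0) \<longleftrightarrow>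
       (\<forall>\<kappa><q. Gx q ^ s dvd (coeff (psi j) \<kappa> - (\<Sum>i\<in>?I. \<Sum>\<iota><q. coeff (lam i) \<iota> * Ahat q (Aent q h R i j) \<iota> \<kappa>)))"
      by (subst modG[OF q2 dp]) (auto simp: LS)
    then show ?thesis by blast
  qed
  have C: "(\<forall>i\<in>?I. vdeg q (coeff ?L0) \<ge>
        vdeg q (coeff (lam i)) - ereal (real (absm h i) * (2 * real (genus q) - 1))) \<longleftrightarrow>
     (\<forall>i\<in>?I. \<forall>\<iota><q. coeff (lam i) \<iota> \<noteq> 0 \<longrightarrow>
        vdeg q (coeff ?L0) \<ge> ereal (real q * real (degree (coeff (lam i) \<iota>)) + real \<iota> * (real q + 1)
                                     - real (absm h i) * (2 * real (genus q) - 1)))"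
    by (simp only: degcond[OF q0, where 'a='a])
  have D: "(\<forall>j\<in>?J. vdeg q (coeff ?L0) \<ge>
        vdeg q (coeff (psi j)) - ereal (real (absm h j) * real_of_int mH)) \<longleftrightarrow>
     (\<forall>j\<in>?J. \<forall>\<kappa><q. coeff (psi j) \<kappa> \<noteq> 0 \<longrightarrow>
        vdeg q (coeff ?L0) \<ge> ereal (real q * real (degree (coeff (psi j) \<kappa>)) + real \<kappa> * (real q + 1)
                                     - real (absm h j) * real_of_int mH))"
    by (simp only: degcond[OF q0, where 'a='a])
  have nz: "vmonic q (coeff ?L0) \<Longrightarrow> (\<exists>i\<in>?I. \<exists>\<iota><q. coeff (lam i) \<iota> \<noteq> 0)"
    using I0 unfolding vmonic_def by blast
  show ?thesis
    unfolding prob1_sol_def prob2_monic_sol_def prob2_sol_def degH_def monicH_def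
    using A B C D nz by blast
qed

end
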